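(* Let $F$ be a field of characteristic two and let $(A,\sigma)$ be a totally decomposable central simple $F$-algebra with orthogonal involution. If $\alpha+\sum_{i=1}^m\sigma(x_i)x_i\in\mathrm{Alt}(A,\sigma)$ for some $\alpha\in F$ and $x_1,\dots,x_m\in A$, then $\alpha\in Q(\mathfrak{Pf}(A,\sigma))$.
   Context: Involutions are of the first kind. $(A,\sigma)$ is totally decomposable if $(A,\sigma)\simeq\bigotimes_{i=1}^n(Q_i,\sigma_i)$ with quaternion $F$-algebras with involution. $\mathrm{Alt}(A,\sigma)=\{\sigma(x)-x\mid x\in A\}$. The Pfister invariant $\mathfrak{Pf}(A,\sigma)$ is the bilinear Pfister form $\langle\!\langle\alpha_1,\dots,\alpha_n\rangle\!\rangle=\langle1,\alpha_1\rangle\otimes\cdots\otimes\langle1,\alpha_n\rangle$, where $\alpha_i\in F^\times$ represents $\mathrm{disc}\,\sigma_i\in F^\times/F^{\times2}$ (independent of the decomposition up to isometry). For a symmetric bilinear form $\mathfrak b$ on $V$, $Q(\mathfrak b)=\{\mathfrak b(v,v)\mid 0\ne v\in V\}\cup\{0\}$. *)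

theory Defs
  imports Main
begin

text \<open>The base field F is a type 'a of class field; the algebra A is a type 'b of class
  ring_1, made into an F-algebra by a ring homomorphism sc from F into the centre of A.\<close>

definition alg_scalars :: "('a::field \<Rightarrow> 'b::ring_1) \<Rightarrow> bool" where
  "alg_scalars sc \<longleftrightarrow> sc 1 = 1 \<and> (\<forall>c d. sc (c + d) = sc c + sc d)
     \<and> (\<forall>c d. sc (c * d) = sc c * sc d) \<and> (\<forall>c x. sc c * x = x * sc c)"

definition fspan :: "('a::field \<Rightarrow> 'b::ring_1) \<Rightarrow> 'b set \<Rightarrow> 'b set" where
  "fspan sc S = {(\<Sum>s\<in>T. sc (c s) * s) | T c. finite T \<and> T \<subseteq> S}"

definition two_sided_ideal :: "'b::ring_1 set \<Rightarrow> bool" where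
  "two_sided_ideal I \<longleftrightarrow> 0 \<in> I \<and> (\<forall>x\<in>I. \<forall>y\<in>I. x + y \<in> I)
     \<and> (\<forall>x\<in>I. \<forall>r. r * x \<in> I \<and> x * r \<in> I)"

definition central_simple :: "('a::field \<Rightarrow> 'b::ring_1) \<Rightarrow> bool" where
  "central_simple sc \<longleftrightarrow> alg_scalars sc
     \<and> (\<exists>S. finite S \<and> fspan sc S = UNIV)
     \<and> (\<forall>z. (\<forall>x. z * x = x * z) \<longrightarrow> z \<in> range sc)
     \<and> (\<forall>I::'b set. two_sided_ideal I \<longrightarrow> I = {0} \<or> I = UNIV)"

definition involution_first_kind :: "('a::field \<Rightarrow> 'b::ring_1) \<Rightarrow> ('b \<Rightarrow> 'b) \<Rightarrow> bool" where
  "involution_first_kind sc \<sigma> \<longleftrightarrow> (\<forall>x y. \<sigma> (x + y) = \<sigma> x + \<sigma> y)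
     \<and> (\<forall>x y. \<sigma> (x * y) = \<sigma> y * \<sigma> x) \<and> (\<forall>x. \<sigma> (\<sigma> x) = x) \<and> (\<forall>c. \<sigma> (sc c) = sc c)"

definition Alt :: "('b::ring_1 \<Rightarrow> 'b) \<Rightarrow> 'b set" where
  "Alt \<sigma> = range (\<lambda>x. \<sigma> x - x)"

definition Alt_on :: "('b::ring_1 \<Rightarrow> 'b) \<Rightarrow> 'b set \<Rightarrow> 'b set" where
  "Alt_on \<sigma> S = (\<lambda>x. \<sigma> x - x) ` S"

text \<open>In characteristic two an involution of the first kind on a central simple algebra
  is symplectic iff 1 lies in Symd(A,sigma) = Alt(A,sigma), and orthogonal otherwise.\<close>
definition orthogonal_char2 :: "('b::ring_1 \<Rightarrow> 'b) \<Rightarrow> bool" where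
  "orthogonal_char2 \<sigma> \<longleftrightarrow> 1 \<notin> Alt \<sigma>"

text \<open>Quaternion subalgebra [a,b) generated by u, v with u^2+u=a, v^2=b, vu=(u+1)v.\<close>
definition quat_basis :: "'b::ring_1 \<Rightarrow> 'b \<Rightarrow> nat \<Rightarrow> 'b" where
  "quat_basis u v k = (if k = 0 then 1 else if k = 1 then u else if k = 2 then v else u * v)"

definition quat_elt :: "('a::field \<Rightarrow> 'b::ring_1) \<Rightarrow> 'b \<Rightarrow> 'b \<Rightarrow> (nat \<Rightarrow> 'a) \<Rightarrow> 'b" where
  "quat_elt sc u v c = sc (c 0) + sc (c 1) * u + sc (c 2) * v + sc (c 3) * (u * v)"

definition quat_sub :: "('a::field \<Rightarrow> 'b::ring_1) \<Rightarrow> 'b \<Rightarrow> 'b \<Rightarrow> 'b set" where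
  "quat_sub sc u v = range (quat_elt sc u v)"

definition quat_nrd :: "'a::field \<Rightarrow> 'a \<Rightarrow> (nat \<Rightarrow> 'a) \<Rightarrow> 'a" where
  "quat_nrd a b c = c 0 ^ 2 + c 0 * c 1 + a * c 1 ^ 2 + b * (c 2 ^ 2 + c 2 * c 3 + a * c 3 ^ 2)"

text \<open>(A,sigma) is isomorphic to the tensor product of the quaternion algebras with
  involution (Q_i, sigma|Q_i), i < n, realised internally: Q_i = [a_i,b_i) generated by
  u_i, v_i; the Q_i pairwise commute, are sigma-stable, and the products of basis elements
  form an F-basis of A (i.e. the multiplication map from the tensor product is bijective).\<close>
definition tensor_index :: "nat \<Rightarrow> (nat \<Rightarrow> nat) set" where
  "tensor_index n = {f. (\<forall>i<n. f i < 4) \<and> (\<forall>i\<ge>n. f i = 0)}"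

definition tensor_basis :: "nat \<Rightarrow> (nat \<Rightarrow> 'b::ring_1) \<Rightarrow> (nat \<Rightarrow> 'b) \<Rightarrow> (nat \<Rightarrow> nat) \<Rightarrow> 'b" where
  "tensor_basis n u v f = prod_list (map (\<lambda>i. quat_basis (u i) (v i) (f i)) [0..<n])"

definition tensor_decomp :: "('a::field \<Rightarrow> 'b::ring_1) \<Rightarrow> ('b \<Rightarrow> 'b) \<Rightarrow> nat
     \<Rightarrow> (nat \<Rightarrow> 'a) \<Rightarrow> (nat \<Rightarrow> 'a) \<Rightarrow> (nat \<Rightarrow> 'b) \<Rightarrow> (nat \<Rightarrow> 'b) \<Rightarrow> bool" where
  "tensor_decomp sc \<sigma> n a b u v \<longleftrightarrow>
     (\<forall>i<n. u i * u i + u i = sc (a i) \<and> v i * v i = sc (b i) \<and> b i \<noteq> 0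
            \<and> v i * u i = (u i + 1) * v i)
   \<and> (\<forall>i<n. \<forall>j<n. i \<noteq> j \<longrightarrow> u i * u j = u j * u i \<and> u i * v j = v j * u i \<and> v i * v j = v j * v i)
   \<and> (\<forall>i<n. \<sigma> (u i) \<in> quat_sub sc (u i) (v i) \<and> \<sigma> (v i) \<in> quat_sub sc (u i) (v i))
   \<and> (\<forall>x. \<exists>c. x = (\<Sum>f\<in>tensor_index n. sc (c f) * tensor_basis n u v f))
   \<and> (\<forall>c. (\<Sum>f\<in>tensor_index n. sc (c f) * tensor_basis n u v f) = 0
          \<longrightarrow> (\<forall>f\<in>tensor_index n. c f = 0))"

text \<open>d in F^x represents disc(sigma|Q) : the class of Nrd(w) mod squares for an invertible
  w in Alt(Q, sigma|Q) (characteristic two, so the sign is irrelevant).\<close>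
definition disc_rep :: "('a::field \<Rightarrow> 'b::ring_1) \<Rightarrow> ('b \<Rightarrow> 'b) \<Rightarrow> 'a \<Rightarrow> 'a \<Rightarrow> 'b \<Rightarrow> 'b \<Rightarrow> 'a \<Rightarrow> bool" where
  "disc_rep sc \<sigma> a b u v d \<longleftrightarrow> d \<noteq> 0 \<and>
     (\<exists>c l. l \<noteq> 0 \<and> quat_elt sc u v c \<in> Alt_on \<sigma> (quat_sub sc u v)
        \<and> (\<exists>y\<in>quat_sub sc u v. quat_elt sc u v c * y = 1 \<and> y * quat_elt sc u v c = 1)
        \<and> d = l ^ 2 * quat_nrd a b c)"

text \<open>The bilinear Pfister form <<alpha_0,...,alpha_{n-1}>>, diagonal with respect to the
  basis indexed by subsets S of {..<n}, with entries prod_{i in S} alpha_i, and its set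
  of represented values Q(b) = {b(v,v) | v \<noteq> 0} \<union> {0}.\<close>
definition pf_bilin :: "(nat \<Rightarrow> 'a::field) \<Rightarrow> nat \<Rightarrow> (nat set \<Rightarrow> 'a) \<Rightarrow> (nat set \<Rightarrow> 'a) \<Rightarrow> 'a" where
  "pf_bilin alph n x y = (\<Sum>S\<in>Pow {..<n}. (\<Prod>i\<in>S. alph i) * x S * y S)"

definition pf_values :: "(nat \<Rightarrow> 'a::field) \<Rightarrow> nat \<Rightarrow> 'a set" where
  "pf_values alph n = {pf_bilin alph n x x | x. \<exists>S\<in>Pow {..<n}. x S \<noteq> 0} \<union> {0}"

end

theory Submission
  imports Defs "HOL.Vector_Spaces"
begin



lemma c2_num: assumes "(1::'a::comm_ring_1) + 1 = 0"
  shows "(numeral (num.Bit0 k) :: 'a) = 0" "(numeral (num.Bit1 k) :: 'a) = 1"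
proof -
  have "(numeral (num.Bit0 k) :: 'a) = numeral k * (1 + 1)" by (metis mult_2_right numeral_Bit0 one_add_one)
  then show "(numeral (num.Bit0 k) :: 'a) = 0" using assms by (simp only: mult_zero_right)
  then show "(numeral (num.Bit1 k) :: 'a) = 1" by (metis numeral_Bit0 numeral_Bit1 add_0)
qed

definition v4 :: "'a \<Rightarrow> 'a \<Rightarrow> 'a \<Rightarrow> 'a \<Rightarrow> nat \<Rightarrow> 'a" where
 "v4 x0 x1 x2 x3 = (\<lambda>k. if k = 0 then x0 else if k = 1 then x1 else if k = 2 then x2 else x3)"
lemma v4_simps[simp]: "v4 x0 x1 x2 x3 0 = x0" "v4 x0 x1 x2 x3 1 = x1" "v4 x0 x1 x2 x3 2 = x2" "v4 x0 x1 x2 x3 3 = x3"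
  by (simp_all add: v4_def)
lemma v4_Suc0[simp]: "v4 x0 x1 x2 x3 (Suc 0) = x1" by (simp add: v4_def)

definition qm :: "'a::field \<Rightarrow> 'a \<Rightarrow> (nat \<Rightarrow> 'a) \<Rightarrow> (nat \<Rightarrow> 'a) \<Rightarrow> nat \<Rightarrow> 'a" where
 "qm a b c d = v4 (c 0 * d 0 + a * c 1 * d 1 + b * c 2 * d 2 + b * c 2 * d 3 + a * b * c 3 * d 3)
   (c 0 * d 1 + c 1 * d 0 + c 1 * d 1 + b * c 2 * d 3 + b * c 3 * d 2)
   (c 0 * d 2 + c 2 * d 0 + a * c 1 * d 3 + c 2 * d 1 + a * c 3 * d 1)
   (c 0 * d 3 + c 3 * d 0 + c 1 * d 2 + c 1 * d 3 + c 2 * d 1)"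

definition un :: "nat \<Rightarrow> nat \<Rightarrow> 'a::field" where "un i = (\<lambda>j. if j = i then 1 else 0)"

lemma sum4: "(\<Sum>k<4. f k) = f 0 + f 1 + f 2 + f (3::nat)"
  by (simp add: numeral_eq_Suc lessThan_Suc add_ac)

lemma cases4: "(k::nat) < 4 \<Longrightarrow> k = 0 \<or> k = 1 \<or> k = 2 \<or> k = 3" by auto

locale base =
  fixes sc :: "'a::field \<Rightarrow> 'b::ring_1" and \<sigma> :: "'b \<Rightarrow> 'b"
  assumes scA: "alg_scalars sc" and invA: "involution_first_kind sc \<sigma>"
    and c2: "(1::'a) + 1 = 0" and orth: "1 \<notin> Alt \<sigma>"
begin

lemma sc_one[simp]: "sc 1 = 1" using scA unfolding alg_scalars_def by blast
lemma sc_add[simp]: "sc (c + d) = sc c + sc d" using scA unfolding alg_scalars_def by blast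
lemma sc_mult[simp]: "sc (c * d) = sc c * sc d" using scA unfolding alg_scalars_def by blast
lemma sc_comm: "sc c * x = x * sc c" using scA unfolding alg_scalars_def by blast
lemma sc_zero[simp]: "sc 0 = 0"
  using sc_add[of 0 0] by simp
lemma sc_minus[simp]: "sc (- c) = - sc c"
  using sc_add[of c "-c"] by (simp add: eq_neg_iff_add_eq_0 add.commute)
lemma sc_diff[simp]: "sc (c - d) = sc c - sc d"
  using sc_add[of c "-d"] by simp
lemma sc_sum: "sc (sum f A) = (\<Sum>x\<in>A. sc (f x))"
  by (induction A rule: infinite_finite_induct) auto

lemma b_c2: "(x::'b) + x = 0"
proof -
  have "x + x = sc (1 + 1) * x" by (simp only: sc_add sc_one distrib_right mult_1_left)
  then show ?thesis using c2 by simp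
qed
lemma b_c2': "(x::'b) + (x + y) = y" by (simp add: add.assoc[symmetric] b_c2)
lemma b_move: assumes "(X::'b) + N = Y + M" shows "X + Y = M + N"
proof -
  have "X + Y = (X + N) + (N + Y)" by (simp add: add_ac b_c2 b_c2')
  also have "\<dots> = M + N" unfolding assms by (simp add: add_ac b_c2 b_c2')
  finally show ?thesis .
qed
lemma b_minus: "- (x::'b) = x" using b_c2[of x] by (simp add: minus_unique)
lemma b_diff: "(x::'b) - y = x + y" using b_minus[of y] by simp
lemma a_c2: "(x::'a) + x = 0"
proof -
  have "x + x = (1 + 1) * x" by (simp add: distrib_right)
  then show ?thesis using c2 by simp
qed
lemma a_minus: "- (x::'a) = x" using a_c2[of x] by (simp add: minus_unique)
lemma a_diff: "(x::'a) - y = x + y" using a_minus[of y] by simp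

lemma nontriv: "(1::'b) \<noteq> 0"
proof
  assume "(1::'b) = 0"
  then have "1 = \<sigma> 0 - 0" by simp
  then have "(1::'b) \<in> Alt \<sigma>" unfolding Alt_def by blast
  then show False using orth by simp
qed

lemma sc_inj: "sc c = sc d \<Longrightarrow> c = d"
proof (rule ccontr)
  assume h: "sc c = sc d" "c \<noteq> d"
  then have "sc (c - d) = 0" by simp
  then have "sc ((c - d) * inverse (c - d)) = 0" by (simp only: sc_mult) simp
  then show False using h(2) nontriv by simp
qed
lemma sc_eq0: "sc c = 0 \<longleftrightarrow> c = 0" using sc_inj[of c 0] by auto

lemma sc_m2: "x * (sc d * y) = sc d * (x * y)"
  by (simp only: mult.assoc[symmetric] sc_comm[of d x, symmetric])
lemma sc_m3: "sc c * (sc d * y) = sc (c * d) * y"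
  by (simp add: mult.assoc)
lemma sc_mm: "sc c * x * (sc d * y) = sc (c * d) * (x * y)"
  by (simp only: mult.assoc sc_m2[of x d y] sc_mult)

lemma sc_cancel: "t \<noteq> 0 \<Longrightarrow> sc (inverse t) * (sc t * y) = y"
  by (simp only: sc_m3) simp

lemma s_add[simp]: "\<sigma> (x + y) = \<sigma> x + \<sigma> y" using invA by (simp add: involution_first_kind_def)
lemma s_mult[simp]: "\<sigma> (x * y) = \<sigma> y * \<sigma> x" using invA by (simp add: involution_first_kind_def)
lemma s_s[simp]: "\<sigma> (\<sigma> x) = x" using invA by (simp add: involution_first_kind_def)
lemma s_sc[simp]: "\<sigma> (sc c) = sc c" using invA by (simp add: involution_first_kind_def)
lemma s_zero[simp]: "\<sigma> 0 = 0" using s_sc[of 0] by simp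
lemma s_one[simp]: "\<sigma> 1 = 1" using s_sc[of 1] by simp
lemma s_scm: "\<sigma> (sc c * x) = sc c * \<sigma> x" by (simp add: sc_comm[of c "\<sigma> x"])
lemma s_sum: "\<sigma> (sum f A) = (\<Sum>x\<in>A. \<sigma> (f x))"
  by (induction A rule: infinite_finite_induct) auto

lemma Alt_iff: "y \<in> Alt \<sigma> \<longleftrightarrow> (\<exists>x. y = \<sigma> x + x)"
  by (auto simp: Alt_def b_diff)

lemma Alt_add: "y \<in> Alt \<sigma> \<Longrightarrow> y' \<in> Alt \<sigma> \<Longrightarrow> y + y' \<in> Alt \<sigma>"
proof -
  assume "y \<in> Alt \<sigma>" "y' \<in> Alt \<sigma>"
  then obtain x x' where "y = \<sigma> x + x" "y' = \<sigma> x' + x'" by (auto simp: Alt_iff)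
  then have "y + y' = \<sigma> (x + x') + (x + x')" by (simp add: add_ac)
  then show ?thesis unfolding Alt_iff by blast
qed
lemma Alt_sc: "y \<in> Alt \<sigma> \<Longrightarrow> sc c * y \<in> Alt \<sigma>"
proof -
  assume "y \<in> Alt \<sigma>"
  then obtain x where "y = \<sigma> x + x" by (auto simp: Alt_iff)
  then have "sc c * y = \<sigma> (sc c * x) + sc c * x" by (simp add: distrib_left sc_comm[of c "\<sigma> x"])
  then show ?thesis unfolding Alt_iff by blast
qed
lemma Alt_sym: "y \<in> Alt \<sigma> \<Longrightarrow> \<sigma> y = y"
  unfolding Alt_iff by (auto simp: add.commute)
lemma sc_notin_Alt: "sc c \<in> Alt \<sigma> \<Longrightarrow> c = 0"
proof (rule ccontr)
  assume a: "sc c \<in> Alt \<sigma>" "c \<noteq> 0"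
  from a(1) have "sc (inverse c) * sc c \<in> Alt \<sigma>" by (rule Alt_sc)
  then have "1 \<in> Alt \<sigma>" using \<open>c \<noteq> 0\<close> by (simp flip: sc_mult)
  then show False using orth by simp
qed

end




locale quat = base sc \<sigma> for sc :: "'a::field \<Rightarrow> 'b::ring_1" and \<sigma> :: "'b \<Rightarrow> 'b" +
  fixes u v :: 'b and a b :: 'a
  assumes uu: "u * u + u = sc a" and vv: "v * v = sc b" and vu: "v * u = (u + 1) * v"
    and indep: "\<And>c. quat_elt sc u v c = 0 \<Longrightarrow> c 0 = 0 \<and> c 1 = 0 \<and> c 2 = 0 \<and> c 3 = 0"
    and su: "\<sigma> u \<in> quat_sub sc u v" and sv: "\<sigma> v \<in> quat_sub sc u v"
begin

abbreviation qe where "qe \<equiv> quat_elt sc u v"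
abbreviation eb where "eb \<equiv> quat_basis u v"

lemma qe_def4: "qe c = sc (c 0) + sc (c 1) * u + sc (c 2) * v + sc (c 3) * (u * v)"
  by (simp add: quat_elt_def)

lemma qe_sum4: "qe c = (\<Sum>k<4. sc (c k) * eb k)"
  by (simp add: sum4 quat_elt_def quat_basis_def)

lemma qe_cong: "(\<And>k. k < 4 \<Longrightarrow> c k = d k) \<Longrightarrow> qe c = qe d"
  unfolding quat_elt_def by simp

lemma qe_add: "qe c + qe d = qe (\<lambda>k. c k + d k)"
  by (simp add: quat_elt_def distrib_right add_ac)

lemma qe_scm: "sc t * qe c = qe (\<lambda>j. t * c j)"
  by (simp add: quat_elt_def distrib_left sc_m3)

lemma qe_zero: "qe (\<lambda>_. 0) = 0"
  by (simp add: quat_elt_def)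

lemma qe_sc: "qe (v4 t 0 0 0) = sc t"
  by (simp add: quat_elt_def)

lemma qe_one: "qe (un 0) = 1"
  by (simp add: quat_elt_def un_def)

lemma qe_un: "k < 4 \<Longrightarrow> qe (un k) = eb k"
  using cases4[of k] by (auto simp: quat_elt_def un_def quat_basis_def)

lemma qe_diff: "qe c - qe d = qe (\<lambda>k. c k - d k)"
  by (simp add: quat_elt_def algebra_simps)

lemma qe_eq: "qe c = qe d \<longleftrightarrow> (\<forall>k<4. c k = d k)"
proof
  assume "qe c = qe d"
  then have "qe (\<lambda>k. c k - d k) = 0" by (simp flip: qe_diff)
  from indep[OF this] show "\<forall>k<4. c k = d k"
    by (auto simp: less_Suc_eq numeral_eq_Suc)
qed (auto intro: qe_cong)

lemma qe_scR: "qe c * sc t = sc t * qe c" by (rule sc_comm[symmetric])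

lemma qe_sumf: "finite I \<Longrightarrow> (\<Sum>i\<in>I. qe (f i)) = qe (\<lambda>k. \<Sum>i\<in>I. f i k)"
  by (induction I rule: finite_induct) (simp_all add: qe_zero qe_add)

lemma t_uu: "u * u = sc a + u"
proof -
  have "u * u = u * u + u + u" by (simp add: add.assoc b_c2)
  then show ?thesis by (simp add: uu)
qed
lemma t_vu: "v * u = u * v + v" using vu by (simp add: distrib_right)
lemma t_u_uv: "u * (u * v) = sc a * v + u * v"
  by (simp add: mult.assoc[symmetric] t_uu distrib_right)
lemma t_uv_u: "u * v * u = sc a * v"
proof -
  have "u * v * u = u * (u * v + v)" by (simp add: mult.assoc t_vu)
  also have "\<dots> = sc a * v + u * v + u * v" by (simp add: distrib_left t_u_uv)
  finally show ?thesis by (simp add: add.assoc b_c2)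
qed
lemma t_v_uv: "v * (u * v) = sc b + sc b * u"
proof -
  have "v * (u * v) = (u * v + v) * v" by (simp add: mult.assoc[symmetric] t_vu)
  also have "\<dots> = u * (v * v) + v * v" by (simp add: distrib_right mult.assoc)
  finally show ?thesis by (simp add: vv sc_comm add.commute)
qed
lemma t_uv_v: "u * v * v = sc b * u"
  by (simp add: mult.assoc vv sc_comm[of b u])
lemma t_uv_uv: "u * v * (u * v) = sc a * sc b"
proof -
  have "u * v * (u * v) = (u * v * u) * v" by (simp only: mult.assoc)
  also have "\<dots> = sc a * v * v" by (simp only: t_uv_u)
  also have "\<dots> = sc a * (v * v)" by (simp only: mult.assoc)
  finally show ?thesis by (simp add: vv)
qed
lemma t_v_u: "v * (u::'b) = u * v + v" by (rule t_vu)


lemma tab: "i < 4 \<Longrightarrow> j < 4 \<Longrightarrow> eb i * eb j = qe (qm a b (un i) (un j))"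
  using cases4[of i] cases4[of j]
  by (auto simp: quat_basis_def qm_def un_def quat_elt_def t_uu t_vu t_u_uv t_uv_u t_v_uv t_uv_v
      t_uv_uv vv)

lemma qm_bilin: "k < 4 \<Longrightarrow> (\<Sum>i<4. \<Sum>j<4. c i * d j * qm a b (un i) (un j) k) = qm a b c d k"
  using cases4[of k] by (auto simp: sum4 qm_def un_def algebra_simps)

lemma qe_mult: "qe c * qe d = qe (qm a b c d)"
proof -
  have "qe c * qe d = (\<Sum>i<4. sc (c i) * eb i * qe d)"
    by (simp only: qe_sum4[of c] sum_distrib_right)
  also have "\<dots> = (\<Sum>i<4. \<Sum>j<4. sc (c i) * eb i * (sc (d j) * eb j))"
    by (simp only: qe_sum4[of d] sum_distrib_left)
  also have "\<dots> = (\<Sum>i<4. \<Sum>j<4. qe (\<lambda>k. c i * d j * qm a b (un i) (un j) k))"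
  proof (intro sum.cong refl)
    fix i j assume ij: "i \<in> {..<4::nat}" "j \<in> {..<4::nat}"
    have "sc (c i) * eb i * (sc (d j) * eb j) = sc (c i * d j) * (eb i * eb j)" by (rule sc_mm)
    also have "\<dots> = sc (c i * d j) * qe (qm a b (un i) (un j))" using ij by (simp only: tab lessThan_iff)
    also have "\<dots> = qe (\<lambda>k. c i * d j * qm a b (un i) (un j) k)" by (rule qe_scm)
    finally show "sc (c i) * eb i * (sc (d j) * eb j) = qe (\<lambda>k. c i * d j * qm a b (un i) (un j) k)" .
  qed
  also have "\<dots> = qe (\<lambda>k. \<Sum>i<4. \<Sum>j<4. c i * d j * qm a b (un i) (un j) k)"
    by (simp add: qe_sumf)
  also have "\<dots> = qe (qm a b c d)"
    by (rule qe_cong) (simp add: qm_bilin)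
  finally show ?thesis .
qed

lemma s_Q: "\<exists>c'. \<sigma> (qe c) = qe c'"
proof -
  obtain p r where p: "\<sigma> u = qe p" and r: "\<sigma> v = qe r"
    using su sv by (auto simp: quat_sub_def)
  have "\<sigma> (qe c) = sc (c 0) + sc (c 1) * qe p + sc (c 2) * qe r + sc (c 3) * (qe r * qe p)"
    by (simp only: qe_def4[of c] s_add s_scm s_mult[of u v] p r s_sc)
  then show ?thesis
    by (simp add: qe_mult qe_scm qe_add flip: qe_sc) blast
qed

end



context base begin
sublocale vs: vector_space "\<lambda>c x. sc c * x"
  by unfold_locales (simp_all add: distrib_left distrib_right sc_m3)

lemma span_sym:
  assumes "s \<in> vs.span S" "\<forall>t\<in>S. \<sigma> t = t" shows "\<sigma> s = s"
proof -
  from assms(1) obtain T r where s: "s = (\<Sum>t\<in>T. sc (r t) * t)" and T: "T \<subseteq> S"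
    unfolding vs.span_explicit by blast
  have "\<sigma> s = (\<Sum>t\<in>T. sc (r t) * \<sigma> t)" unfolding s by (simp only: s_sum s_scm)
  also have "\<dots> = s" unfolding s using T assms(2) by (intro sum.cong) auto
  finally show ?thesis .
qed
end

context quat begin

lemma sq_id: "k < 4 \<Longrightarrow> qm a b c c k = c 1 * c k + quat_nrd a b c * un 0 k"
  using cases4[of k] by (auto simp: qm_def un_def quat_nrd_def algebra_simps power2_eq_square c2_num[OF c2])

lemma anti_id: "cw 1 = 0 \<Longrightarrow> k < 4 \<Longrightarrow> qm a b cw c k + qm a b c cw k = c 1 * cw k + qm a b c cw 1 * un 0 k"
  using cases4[of k] by (auto simp: qm_def un_def algebra_simps c2_num[OF c2])

lemma qe_sq: "qe c * qe c = sc (c 1) * qe c + sc (quat_nrd a b c)"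
proof -
  have "qe c * qe c = qe (qm a b c c)" by (rule qe_mult)
  also have "\<dots> = qe (\<lambda>k. c 1 * c k + quat_nrd a b c * un 0 k)" by (rule qe_cong) (simp add: sq_id)
  also have "\<dots> = qe (\<lambda>k. c 1 * c k) + qe (\<lambda>k. quat_nrd a b c * un 0 k)" by (rule qe_add[symmetric])
  also have "\<dots> = sc (c 1) * qe c + sc (quat_nrd a b c) * qe (un 0)" by (simp only: qe_scm)
  also have "\<dots> = sc (c 1) * qe c + sc (quat_nrd a b c)" by (simp add: qe_one)
  finally show ?thesis .
qed

lemma qe_sc_iff: "qe c = sc t \<Longrightarrow> c 1 = 0"
  using qe_eq[of c "v4 t 0 0 0"] by (simp add: qe_sc)

lemma trd_s: assumes "\<sigma> (qe c) = qe c'" shows "c' 1 = c 1"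
proof (rule ccontr)
  assume ne: "c' 1 \<noteq> c 1"
  let ?y = "qe c" and ?y' = "qe c'"
  have e1: "\<sigma> (?y * ?y) = sc (c 1) * ?y' + sc (quat_nrd a b c)"
    by (simp only: qe_sq s_add s_scm assms s_sc)
  have e2: "\<sigma> (?y * ?y) = ?y' * ?y'"
    by (simp only: s_mult assms)
  have e3: "?y' * ?y' = sc (c' 1) * ?y' + sc (quat_nrd a b c')"
    by (rule qe_sq)
  have "sc (c 1) * ?y' + sc (quat_nrd a b c) = sc (c' 1) * ?y' + sc (quat_nrd a b c')"
    using e1 e2 e3 by (simp only:)
  then have "sc (c 1) * ?y' + sc (c' 1) * ?y' = sc (quat_nrd a b c') + sc (quat_nrd a b c)" by (rule b_move)
  then have e: "sc (c 1 + c' 1) * ?y' = sc (quat_nrd a b c' + quat_nrd a b c)" by (simp add: distrib_right)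
  have nz: "c 1 + c' 1 \<noteq> 0"
  proof
    assume h: "c 1 + c' 1 = 0"
    have "c 1 = c 1 + (c' 1 + c' 1)" using a_c2[of "c' 1"] by simp
    also have "\<dots> = c' 1" using h by (simp only: add.assoc[symmetric] add_0)
    finally show False using ne by simp
  qed
  have "sc (inverse (c 1 + c' 1)) * (sc (c 1 + c' 1) * ?y') = sc (inverse (c 1 + c' 1) * (quat_nrd a b c' + quat_nrd a b c))"
    unfolding e by (simp only: sc_m3 sc_mult)
  then have y': "?y' = sc (inverse (c 1 + c' 1) * (quat_nrd a b c' + quat_nrd a b c))"
    by (simp only: sc_cancel[OF nz])
  then have h1: "c' 1 = 0" by (rule qe_sc_iff)
  have "?y = \<sigma> ?y'" using assms by (metis s_s)
  also have "\<sigma> ?y' = sc (inverse (c 1 + c' 1) * (quat_nrd a b c' + quat_nrd a b c))" by (simp only: y' s_sc)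
  finally have "?y = sc (inverse (c 1 + c' 1) * (quat_nrd a b c' + quat_nrd a b c))" .
  then have "c 1 = 0" by (rule qe_sc_iff)
  then show False using ne h1 by simp
qed

lemma Q_span: "qe c \<in> vs.span {1, u, v, u * v}"
  unfolding qe_def4
  by (intro vs.span_add vs.span_scale[where x=1, simplified] vs.span_scale vs.span_base) auto

lemma alt_line:
  assumes w: "w = \<sigma> z + z" "z \<in> range qe" "w \<notin> range sc" and x: "x \<in> range qe"
  shows "\<exists>k. \<sigma> x + x = sc k * w"
proof (rule ccontr)
  define y where "y = \<sigma> x + x"
  assume "\<not> (\<exists>k. \<sigma> x + x = sc k * w)"
  then have ny: "\<And>k. y \<noteq> sc k * w" unfolding y_def by blast
  have yA: "y \<in> Alt \<sigma>" unfolding y_def Alt_iff by blast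
  have wA: "w \<in> Alt \<sigma>" unfolding w Alt_iff by blast
  have sy: "\<sigma> y = y" using yA by (rule Alt_sym)
  have sw: "\<sigma> w = w" using wA by (rule Alt_sym)
  have w0: "w \<noteq> 0" using w(3) by (metis rangeI sc_zero)
  have I1: "1 \<notin> vs.span {}" using nontriv by simp
  have I2: "w \<notin> vs.span {1}"
  proof
    assume "w \<in> vs.span {1}"
    then obtain k where "w - sc k * 1 \<in> vs.span {}" using vs.span_breakdown_eq by blast
    then have "w = sc k" by simp
    then show False using w(3) by auto
  qed
  have I3: "y \<notin> vs.span {w, 1}"
  proof
    assume "y \<in> vs.span {w, 1}"
    then obtain k where "y - sc k * w \<in> vs.span {1}" using vs.span_breakdown_eq by blast
    then obtain d where "y - sc k * w - sc d * 1 \<in> vs.span {}" using vs.span_breakdown_eq by blast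
    then have e: "y - sc k * w = sc d" by simp
    have "y - sc k * w \<in> Alt \<sigma>" unfolding b_diff by (intro Alt_add yA Alt_sc wA)
    then have "d = 0" using e sc_notin_Alt by simp
    then show False using e ny by simp
  qed
  have I4: "z \<notin> vs.span {y, w, 1}"
  proof
    assume "z \<in> vs.span {y, w, 1}"
    then have "\<sigma> z = z" by (rule span_sym) (simp add: sy sw)
    then have "w = 0" using w(1) by (simp add: b_c2)
    then show False using w0 by simp
  qed
  have I5: "x \<notin> vs.span {z, y, w, 1}"
  proof
    assume "x \<in> vs.span {z, y, w, 1}"
    then obtain k where s: "x - sc k * z \<in> vs.span {y, w, 1}" using vs.span_breakdown_eq by blast
    define s where "s = x - sc k * z"
    have ss: "\<sigma> s = s" unfolding s_def by (rule span_sym[OF s]) (simp add: sy sw)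
    have xs: "x = s + sc k * z" unfolding s_def b_diff by (simp add: add.assoc b_c2)
    have sx: "\<sigma> x = s + sc k * \<sigma> z" using ss by (simp only: xs s_add s_scm)
    have "y = sc k * (\<sigma> z + z)" unfolding y_def sx
      by (subst xs) (simp add: distrib_left add_ac b_c2')
    then show False using ny[of k] w(1) by simp
  qed
  have ind: "vs.independent {x, z, y, w, 1}"
    by (intro vs.independent_insertI I1 I2 I3 I4 I5 vs.independent_empty)
  have nin: "x \<notin> {z, y, w, 1}" "z \<notin> {y, w, 1}" "y \<notin> {w, 1}" "w \<notin> {1}"
    using I2 vs.span_superset[of "{1}"] I3 vs.span_superset[of "{w, 1}"]
      I4 vs.span_superset[of "{y, w, 1}"] I5 vs.span_superset[of "{z, y, w, 1}"] by blast+
  then have card5: "card {x, z, y, w, 1} = 5" by simp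
  obtain cz where cz: "z = qe cz" using w(2) by auto
  obtain cx where cx: "x = qe cx" using x by auto
  obtain cs where cs: "\<sigma> x = qe cs" using s_Q cx by blast
  have "y = qe (\<lambda>k. cs k + cx k)" by (simp only: y_def cs flip: qe_add) (simp only: cx)
  moreover obtain cs' where cs': "\<sigma> z = qe cs'" using s_Q cz by blast
  then have "w = qe (\<lambda>k. cs' k + cz k)" by (simp only: w(1) cs' flip: qe_add) (simp only: cz)
  ultimately have sub: "{x, z, y, w, 1} \<subseteq> vs.span {1, u, v, u * v}"
    using Q_span[of cx] Q_span[of cz] Q_span[of "un 0"] cx cz qe_one
      Q_span[of "\<lambda>k. cs k + cx k"] Q_span[of "\<lambda>k. cs' k + cz k"] by simp
  have "card {1, u, v, u * v} \<le> 4" by (simp add: card_insert_if)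
  moreover have "card {x, z, y, w, 1} \<le> card {1, u, v, u * v}"
    using vs.independent_span_bound[OF _ ind sub] by simp
  ultimately show False using card5 by simp
qed

end



lemma id_main:
  fixes a b w2 w3 x y :: "'a::field"
  assumes c2: "(1::'a) + 1 = 0"
  shows "qm a b (v4 (a + b * (x^2 + x * y + a * y^2) + 1) 1 x y)
     (qm a b (\<lambda>j. quat_nrd a b (v4 (b * (x * w3 + y * w2)) 0 w2 w3) * c j
                 + qm a b c (v4 (b * (x * w3 + y * w2)) 0 w2 w3) 1 * v4 (b * (x * w3 + y * w2)) 0 w2 w3 j) c) 1
   = quat_nrd a b (v4 (b * (x * w3 + y * w2)) 0 w2 w3) * (qm a b (v4 1 1 x y) c 1)^2
     + (qm a b (v4 1 1 x y) (qm a b (v4 (b * (x * w3 + y * w2)) 0 w2 w3) c) 1)^2"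
  unfolding qm_def quat_nrd_def v4_simps v4_Suc0
  by (simp add: algebra_simps power2_eq_square c2_num[OF c2])

lemma id_phiw:
  fixes a b w2 w3 x y :: "'a::field"
  assumes c2: "(1::'a) + 1 = 0"
  shows "qm a b (v4 (a + b * (x^2 + x * y + a * y^2) + 1) 1 x y) (v4 (b * (x * w3 + y * w2)) 0 w2 w3) 1 = 0"
  unfolding qm_def quat_nrd_def v4_simps v4_Suc0
  by (simp add: algebra_simps power2_eq_square c2_num[OF c2])

lemma lin_phi: "(\<Sum>k<4. c k * qm a b z (un k) 1) = qm a b z c 1"
  by (simp add: sum4 qm_def un_def algebra_simps)

lemma qm_lin1: "qm a b z (\<lambda>j. c j + t * e j) 1 = qm a b z c 1 + t * qm a b z e 1"
  by (simp add: qm_def algebra_simps)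

lemma qm_scal2: "qm a b z (\<lambda>j. t * f j) 1 = t * qm a b z f 1"
  by (simp add: qm_def algebra_simps)

lemma qm_scal1: "qm a b (\<lambda>j. t * c j) d = (\<lambda>k. t * qm a b c d k)"
  by (rule ext) (simp add: qm_def v4_def algebra_simps)

lemma qm_cong: "(\<And>j. j < 4 \<Longrightarrow> c j = c' j) \<Longrightarrow> (\<And>j. j < 4 \<Longrightarrow> d j = d' j) \<Longrightarrow> qm a b c d = qm a b c' d'"
  by (simp add: qm_def)

context quat begin

lemma quat_main:
  assumes disc: "disc_rep sc \<sigma> a b u v d" and b0: "b \<noteq> 0"
  shows "\<exists>lam::nat \<Rightarrow> 'a. lam 0 = 1 \<and>
    (\<forall>c c'. \<sigma> (qe c) = qe c' \<longrightarrow> (\<Sum>k<4. c' k * lam k) = (\<Sum>k<4. c k * lam k)) \<and>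
    (\<forall>k<4. \<forall>c'. \<sigma> (eb k) * eb k = qe c' \<longrightarrow> (\<exists>s t. (\<Sum>j<4. c' j * lam j) = s^2 + d * t^2))"
proof -
  from disc obtain cw l where l0: "l \<noteq> 0" and wA: "qe cw \<in> Alt_on \<sigma> (quat_sub sc u v)"
     and winv: "\<exists>y\<in>quat_sub sc u v. qe cw * y = 1 \<and> y * qe cw = 1" and dd: "d = l^2 * quat_nrd a b cw"
    unfolding disc_rep_def by blast
  define w where "w = qe cw"
  obtain z where zQ: "z \<in> range qe" and wz: "w = \<sigma> z + z"
    using wA unfolding Alt_on_def quat_sub_def w_def b_diff by auto
  obtain yi where wy: "w * yi = 1" using winv w_def by auto
  have w0: "w \<noteq> 0" using wy nontriv by auto
  obtain cz where cz: "z = qe cz" using zQ by auto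
  obtain cz' where cz': "\<sigma> z = qe cz'" using s_Q cz by blast
  have tz: "cz' 1 = cz 1" using trd_s[of cz cz'] cz cz' by simp
  have "qe cw = qe (\<lambda>k. cz' k + cz k)" using wz cz cz' w_def qe_add by simp
  then have "cw 1 = cz' 1 + cz 1" using qe_eq by simp
  also have "\<dots> = cz 1 + cz 1" using tz by simp
  also have "\<dots> = 0" by (rule a_c2)
  finally have cw1: "cw 1 = 0" .
  then have cw1': "cw (Suc 0) = 0" by simp
  have wns: "w \<notin> range sc"
  proof
    assume "w \<in> range sc" then obtain k where wk: "w = sc k" by auto
    have "w \<in> Alt \<sigma>" using wz Alt_iff by blast
    then have "k = 0" using wk sc_notin_Alt by simp
    then show False using w0 wk by simp
  qed
  define N where "N = quat_nrd a b cw"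
  have ww: "w * w = sc N" using qe_sq[of cw] cw1 unfolding w_def N_def by simp
  have N0: "N \<noteq> 0"
  proof
    assume "N = 0"
    then have "w * w = 0" using ww by simp
    then have "w * (w * yi) = 0" by (simp add: mult.assoc[symmetric])
    then have "w = 0" using wy by simp
    then show False using w0 by simp
  qed
  have c23: "cw 2 \<noteq> 0 \<or> cw 3 \<noteq> 0"
  proof (rule ccontr)
    assume "\<not> (cw 2 \<noteq> 0 \<or> cw 3 \<noteq> 0)"
    then have "w = qe (v4 (cw 0) 0 0 0)" unfolding w_def using cw1 by (intro qe_cong) (auto dest!: cases4)
    then show False using wns qe_sc by auto
  qed
  obtain x0 y0 where xy: "cw 0 = b * (x0 * cw 3 + y0 * cw 2)"
  proof (cases "cw 3 = 0")
    case True then have "cw 2 \<noteq> 0" using c23 by simp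
    then show ?thesis using that[of 0 "cw 0 / (b * cw 2)"] b0 True by simp
  next
    case False then show ?thesis using that[of "cw 0 / (b * cw 3)" 0] b0 by simp
  qed
  define W where "W = v4 (b * (x0 * cw 3 + y0 * cw 2)) 0 (cw 2) (cw 3)"
  have wW: "w = qe W" unfolding w_def W_def by (rule qe_cong) (auto dest!: cases4 simp: xy cw1 cw1')
  have NW: "N = quat_nrd a b W" unfolding N_def W_def quat_nrd_def by (simp add: xy cw1 cw1')
  have W1: "W 1 = 0" and W2: "W 2 = cw 2" and W3: "W 3 = cw 3" unfolding W_def by simp_all
  define zz where "zz = v4 (a + b * (x0^2 + x0 * y0 + a * y0^2) + 1) 1 x0 y0"
  define lam where "lam = (\<lambda>k. qm a b zz (un k) 1)"
  have lamc: "\<And>c. (\<Sum>k<4. c k * lam k) = qm a b zz c 1" unfolding lam_def by (rule lin_phi)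
  have phiW: "qm a b zz W 1 = 0" unfolding zz_def W_def by (rule id_phiw[OF c2])
  have sform: "\<sigma> (qe c) = qe (\<lambda>j. c j + (qm a b c W 1 / N) * W j)" for c
  proof -
    have xQ: "qe c \<in> range qe" by simp
    obtain k2 where k2: "\<sigma> (qe c) + qe c = sc k2 * w" using alt_line[OF wz zQ wns xQ] by blast
    have xwQ: "qe c * w \<in> range qe" unfolding wW qe_mult by simp
    obtain k1 where k1: "\<sigma> (qe c * w) + qe c * w = sc k1 * w" using alt_line[OF wz zQ wns xwQ] by blast
    have sw: "\<sigma> w = w" using Alt_sym wz Alt_iff by blast
    have sx: "\<sigma> (qe c) = sc k2 * w + qe c"
    proof -
      have "\<sigma> (qe c) = \<sigma> (qe c) + qe c + qe c" by (simp add: add.assoc b_c2)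
      then show ?thesis using k2 by simp
    qed
    have "\<sigma> (qe c * w) = w * (sc k2 * w + qe c)" by (simp only: s_mult sw sx)
    also have "\<dots> = sc (k2 * N) + w * qe c" by (simp only: distrib_left sc_m2 ww sc_mult)
    finally have e1: "sc (k2 * N) + w * qe c + qe c * w = sc k1 * w" using k1 by simp
    have L: "qe (\<lambda>j. k2 * N * un 0 j + qm a b W c j + qm a b c W j) = sc (k2 * N) + w * qe c + qe c * w"
      by (simp only: flip: qe_add) (simp only: qe_scm[symmetric] qe_one mult_1_right wW qe_mult)
    have R: "qe (\<lambda>j. k1 * W j) = sc k1 * w" by (simp only: wW qe_scm)
    have "qe (\<lambda>j. k2 * N * un 0 j + qm a b W c j + qm a b c W j) = qe (\<lambda>j. k1 * W j)"
      unfolding L R by (rule e1)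
    then have eqs: "\<forall>j<4. k2 * N * un 0 j + qm a b W c j + qm a b c W j = k1 * W j"
      by (simp only: qe_eq)
    have ej: "k2 * N * un 0 j + (c 1 * W j + qm a b c W 1 * un 0 j) = k1 * W j" if "j < 4" for j
      using eqs[rule_format, OF that] anti_id[where cw=W and c=c and k=j, OF W1 that] by (simp add: add.assoc)
    have k1c: "k1 = c 1"
    proof (cases "cw 2 = 0")
      case True
      then have "cw 3 \<noteq> 0" using c23 by simp
      then show ?thesis using ej[of 3] W3 by (simp add: un_def)
    next
      case False
      then show ?thesis using ej[of 2] W2 by (simp add: un_def)
    qed
    have "k2 * N + (c 1 * W 0 + qm a b c W 1) = k1 * W 0" using ej[of 0] by (simp add: un_def)
    then have "k2 * N + qm a b c W 1 = 0" using k1c by (simp add: algebra_simps)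
    then have "k2 * N = - qm a b c W 1" by (simp add: eq_neg_iff_add_eq_0)
    then have "k2 * N = qm a b c W 1" by (simp only: a_minus)
    then have k2v: "k2 = qm a b c W 1 / N" using N0 by (simp add: field_simps)
    have "\<sigma> (qe c) = qe (\<lambda>j. k2 * W j) + qe c" unfolding sx wW qe_scm ..
    also have "\<dots> = qe (\<lambda>j. c j + (qm a b c W 1 / N) * W j)" unfolding qe_add k2v by (simp add: add.commute)
    finally show ?thesis .
  qed
  show ?thesis
  proof (rule exI[of _ lam], intro conjI allI impI)
    show "lam 0 = 1" unfolding lam_def zz_def by (simp add: qm_def un_def)
  next
    fix c c' assume h: "\<sigma> (qe c) = qe c'"
    then have "\<forall>j<4. c' j = c j + (qm a b c W 1 / N) * W j" using sform[of c] qe_eq by simp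
    then have "qm a b zz c' 1 = qm a b zz (\<lambda>j. c j + (qm a b c W 1 / N) * W j) 1"
      by (intro fun_cong[OF qm_cong]) auto
    also have "\<dots> = qm a b zz c 1" by (simp only: qm_lin1 phiW) simp
    finally show "(\<Sum>k<4. c' k * lam k) = (\<Sum>k<4. c k * lam k)" by (simp only: lamc)
  next
    fix k c' assume k: "k < 4" and h: "\<sigma> (eb k) * eb k = qe c'"
    define c where "c = (un k :: nat \<Rightarrow> 'a)"
    define T where "T = qm a b c W 1"
    define c1 where "c1 = (\<lambda>j. c j + (T / N) * W j)"
    have "\<sigma> (eb k) * eb k = qe (qm a b c1 c)"
      unfolding c1_def T_def c_def qe_un[OF k, symmetric] sform qe_mult ..
    then have "\<forall>j<4. c' j = qm a b c1 c j" using h qe_eq by simp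
    then have v1: "qm a b zz c' 1 = qm a b zz (qm a b c1 c) 1"
      by (intro fun_cong[OF qm_cong]) auto
    have Nc1: "(\<lambda>j. N * c1 j) = (\<lambda>j. N * c j + T * W j)"
      unfolding c1_def using N0 by (intro ext) (simp add: field_simps)
    have "N * qm a b zz (qm a b c1 c) 1 = qm a b zz (qm a b (\<lambda>j. N * c1 j) c) 1"
      by (simp only: qm_scal1 qm_scal2)
    also have "\<dots> = N * (qm a b (v4 1 1 x0 y0) c 1)^2 + (qm a b (v4 1 1 x0 y0) (qm a b W c) 1)^2"
      unfolding Nc1 unfolding T_def NW zz_def W_def by (rule id_main[OF c2])
    finally have v2: "N * qm a b zz (qm a b c1 c) 1 = N * (qm a b (v4 1 1 x0 y0) c 1)^2 + (qm a b (v4 1 1 x0 y0) (qm a b W c) 1)^2" .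
    define t1 where "t1 = qm a b (v4 1 1 x0 y0) c 1"
    define t2 where "t2 = qm a b (v4 1 1 x0 y0) (qm a b W c) 1"
    have "(\<Sum>j<4. c' j * lam j) = t1^2 + d * (t2 / (l * N))^2"
    proof -
      have "(\<Sum>j<4. c' j * lam j) = qm a b zz (qm a b c1 c) 1" by (simp only: lamc v1)
      also have "\<dots> = t1^2 + t2^2 / N" using v2 N0 unfolding t1_def t2_def by (simp add: field_simps)
      also have "\<dots> = t1^2 + d * (t2 / (l * N))^2" using N0 l0 unfolding dd N_def[symmetric]
        by (simp add: field_simps power2_eq_square)
      finally show ?thesis .
    qed
    then show "\<exists>s t. (\<Sum>j<4. c' j * lam j) = s^2 + d * t^2" by blast
  qed
qed

end




lemma TI_0: "tensor_index 0 = {\<lambda>_. 0}"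
  by (auto simp: tensor_index_def)

lemma TI_Suc: "tensor_index (Suc m) = (\<lambda>(f, k). f(m := k)) ` (tensor_index m \<times> {..<4})"
proof (intro equalityI subsetI)
  fix g assume g: "g \<in> tensor_index (Suc m)"
  then have "g(m := 0) \<in> tensor_index m" "g m < 4"
    by (auto simp: tensor_index_def)
  moreover have "g = (g(m := 0))(m := g m)" by simp
  ultimately show "g \<in> (\<lambda>(f, k). f(m := k)) ` (tensor_index m \<times> {..<4})"
    by (intro image_eqI[where x="(g(m := 0), g m)"]) auto
next
  fix g assume "g \<in> (\<lambda>(f, k). f(m := k)) ` (tensor_index m \<times> {..<4})"
  then obtain f k where "f \<in> tensor_index m" "k < 4" "g = f(m := k)" by auto
  then show "g \<in> tensor_index (Suc m)" by (auto simp: tensor_index_def less_Suc_eq)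
qed

lemma TI_inj: "inj_on (\<lambda>(f, k). f(m := k)) (tensor_index m \<times> {..<4})"
proof (rule inj_onI, clarify)
  fix f k f' k' assume h: "f \<in> tensor_index m" "f' \<in> tensor_index m" "f(m := k) = f'(m := k')"
  then have "k = k'" by (metis fun_upd_same)
  moreover have "f = f'"
  proof
    fix i show "f i = f' i"
    proof (cases "i = m")
      case True then show ?thesis using h(1,2) by (simp add: tensor_index_def)
    next
      case False then show ?thesis using fun_cong[OF h(3), of i] by simp
    qed
  qed
  ultimately show "f = f' \<and> k = k'" by simp
qed

lemma TI_finite: "finite (tensor_index m)"
  by (induction m) (simp_all add: TI_0 TI_Suc)

lemma sum_TI_Suc: "(\<Sum>g\<in>tensor_index (Suc m). F g) = (\<Sum>f\<in>tensor_index m. \<Sum>k<4. F (f(m := k)))"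
  unfolding TI_Suc by (simp add: sum.reindex[OF TI_inj] sum.cartesian_product prod.case_distrib)

lemma TB_Suc: "tensor_basis (Suc m) u v (f(m := k)) = tensor_basis m u v f * quat_basis (u m) (v m) k"
proof -
  have "(\<Prod>i\<leftarrow>[0..<m]. quat_basis (u i) (v i) (if i = m then k else f i)) = (\<Prod>i\<leftarrow>[0..<m]. quat_basis (u i) (v i) (f i))"
    by (intro arg_cong[where f=prod_list] map_cong) auto
  then show ?thesis by (simp add: tensor_basis_def)
qed

lemma sumprod_TI: "(\<Sum>f\<in>tensor_index m. \<Prod>i<m. g i (f i)) = (\<Prod>i<m. \<Sum>k<4. (g i k :: 'a::comm_semiring_1))"
proof (induction m)
  case 0 then show ?case by (simp add: TI_0)
next
  case (Suc m)
  have "(\<Sum>f\<in>tensor_index (Suc m). \<Prod>i<Suc m. g i (f i)) = (\<Sum>f\<in>tensor_index m. \<Sum>k<4. (\<Prod>i<m. g i (f i)) * g m k)"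
    unfolding sum_TI_Suc by (intro sum.cong refl) (simp add: lessThan_Suc_atMost[symmetric] prod.lessThan_Suc)
  also have "\<dots> = (\<Sum>f\<in>tensor_index m. \<Prod>i<m. g i (f i)) * (\<Sum>k<4. g m k)"
    by (subst sum_distrib_right, subst sum_distrib_left, rule refl)
  finally show ?case using Suc by simp
qed

lemma pl_comm: "(\<And>j. j < m \<Longrightarrow> g j * x = x * g j) \<Longrightarrow> prod_list (map g [0..<m]) * x = x * prod_list (map g [0..<m])"
  for x :: "'b::monoid_mult"
proof (induction m)
  case 0 then show ?case by simp
next
  case (Suc m)
  then have ih: "prod_list (map g [0..<m]) * x = x * prod_list (map g [0..<m])" by simp
  have "prod_list (map g [0..<Suc m]) * x = prod_list (map g [0..<m]) * (g m * x)" by (simp add: mult.assoc)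
  also have "\<dots> = prod_list (map g [0..<m]) * x * g m" using Suc.prems[of m] by (simp add: mult.assoc)
  also have "\<dots> = x * prod_list (map g [0..<Suc m])" by (simp add: ih mult.assoc)
  finally show ?case .
qed

lemma pl_mult: "(\<And>i j. i < m \<Longrightarrow> j < i \<Longrightarrow> g j * f i = f i * g j) \<Longrightarrow>
  prod_list (map (\<lambda>i. f i * g i) [0..<m]) = prod_list (map f [0..<m]) * prod_list (map g [0..<m])"
  for f g :: "nat \<Rightarrow> 'b::monoid_mult"
proof (induction m)
  case 0 then show ?case by simp
next
  case (Suc m)
  have c: "prod_list (map g [0..<m]) * f m = f m * prod_list (map g [0..<m])"
    by (rule pl_comm) (use Suc.prems in auto)
  have "prod_list (map (\<lambda>i. f i * g i) [0..<Suc m]) = prod_list (map f [0..<m]) * (prod_list (map g [0..<m]) * f m) * g m"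
    using Suc by (simp add: mult.assoc)
  also have "\<dots> = prod_list (map f [0..<Suc m]) * prod_list (map g [0..<Suc m])"
    by (simp only: c) (simp add: mult.assoc)
  finally show ?case .
qed

lemma pl_ones: "(\<And>j. j < m \<Longrightarrow> g j = 1) \<Longrightarrow> prod_list (map g [0..<m]) = (1 :: 'b::monoid_mult)"
  by (induction m) auto

lemma pl_single: "i < m \<Longrightarrow> (\<And>j. j < m \<Longrightarrow> j \<noteq> i \<Longrightarrow> g j = 1) \<Longrightarrow> prod_list (map g [0..<m]) = (g i :: 'b::monoid_mult)"
proof (induction m)
  case 0 then show ?case by simp
next
  case (Suc m)
  show ?case
  proof (cases "i = m")
    case True
    have "prod_list (map g [0..<m]) = 1"
      by (rule pl_ones) (use Suc.prems(2) True in auto)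
    then show ?thesis using True by simp
  next
    case False
    then have "prod_list (map g [0..<m]) = g i" using Suc by auto
    then show ?thesis using Suc.prems(2)[of m] False by simp
  qed
qed





lemma pf_range: "pf_values alph n = range (\<lambda>x. pf_bilin alph n x x)"
proof (intro equalityI subsetI)
  fix y assume y: "y \<in> pf_values alph n"
  show "y \<in> range (\<lambda>x. pf_bilin alph n x x)"
  proof (cases "y = 0")
    case True
    have z: "pf_bilin alph n (\<lambda>_. 0) (\<lambda>_. 0) = 0" by (simp add: pf_bilin_def)
    have "pf_bilin alph n (\<lambda>_. 0) (\<lambda>_. 0) \<in> range (\<lambda>x. pf_bilin alph n x x)" by (rule rangeI)
    then show ?thesis using True z by simp
  next
    case False
    then have "y \<in> {pf_bilin alph n x x | x. \<exists>S\<in>Pow {..<n}. x S \<noteq> 0}" using y unfolding pf_values_def by blast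
    then show ?thesis by blast
  qed
next
  fix y assume "y \<in> range (\<lambda>x. pf_bilin alph n x x)"
  then obtain x where y: "y = pf_bilin alph n x x" by blast
  show "y \<in> pf_values alph n"
  proof (cases "\<exists>S\<in>Pow {..<n}. x S \<noteq> 0")
    case True
    then have "y \<in> {pf_bilin alph n x x | x. \<exists>S\<in>Pow {..<n}. x S \<noteq> 0}" using y by blast
    then show ?thesis unfolding pf_values_def by blast
  next
    case False
    have "y = 0" unfolding y pf_bilin_def
    proof (rule sum.neutral, rule ballI)
      fix S assume "S \<in> Pow {..<n}"
      then have "x S = 0" using False by blast
      then show "(\<Prod>i\<in>S. alph i) * x S * x S = 0" by simp
    qed
    then show ?thesis unfolding pf_values_def by blast
  qed
qed

lemma pf_add: assumes c2: "(1::'a::field) + 1 = 0"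
  shows "pf_bilin alph n x x + pf_bilin alph n y y = pf_bilin alph n (\<lambda>S. x S + y S) (\<lambda>S. x S + (y S :: 'a))"
  unfolding pf_bilin_def sum.distrib[symmetric]
  by (intro sum.cong refl) (simp add: algebra_simps c2_num[OF c2])

lemma pf_scal: "c^2 * pf_bilin alph n x x = pf_bilin alph n (\<lambda>S. c * x S) (\<lambda>S. c * (x S :: 'a::field))"
  unfolding pf_bilin_def sum_distrib_left
  by (intro sum.cong refl) (simp add: algebra_simps power2_eq_square)

lemma pf_prod: "(\<Prod>i<n. s i^2 + alph i * t i^2) =
   pf_bilin alph n (\<lambda>S. (\<Prod>i\<in>S. t i) * (\<Prod>i\<in>{..<n} - S. s i)) (\<lambda>S. (\<Prod>i\<in>S. t i) * (\<Prod>i\<in>{..<n} - S. (s i :: 'a::field)))"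
proof -
  have "(\<Prod>i<n. s i^2 + alph i * t i^2) = (\<Prod>i<n. alph i * t i^2 + s i^2)" by (simp add: add.commute)
  also have "\<dots> = (\<Sum>S\<in>Pow {..<n}. (\<Prod>i\<in>S. alph i * t i^2) * (\<Prod>i\<in>{..<n} - S. s i^2))"
    by (rule prod_add) simp
  also have "\<dots> = pf_bilin alph n (\<lambda>S. (\<Prod>i\<in>S. t i) * (\<Prod>i\<in>{..<n} - S. s i)) (\<lambda>S. (\<Prod>i\<in>S. t i) * (\<Prod>i\<in>{..<n} - S. s i))"
    unfolding pf_bilin_def
    by (intro sum.cong refl) (simp add: prod.distrib prod_power_distrib power2_eq_square algebra_simps)
  finally show ?thesis .
qed

context base begin

lemma qe_sum4g: "quat_elt sc u' v' c = (\<Sum>k<4. sc (c k) * quat_basis u' v' k)"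
  by (simp add: sum4 quat_elt_def quat_basis_def)

lemma qe_ung: "k < 4 \<Longrightarrow> quat_elt sc u' v' (un k) = quat_basis u' v' k"
  using cases4[of k] by (auto simp: quat_elt_def un_def quat_basis_def)

lemma expand: "prod_list (map (\<lambda>i. quat_elt sc (u i) (v i) (C i)) [0..<m]) =
  (\<Sum>f\<in>tensor_index m. sc (\<Prod>i<m. C i (f i)) * tensor_basis m u v f)"
proof (induction m)
  case 0 then show ?case by (simp add: TI_0 tensor_basis_def)
next
  case (Suc m)
  let ?P = "\<lambda>f. \<Prod>i<m. C i (f i)"
  have "prod_list (map (\<lambda>i. quat_elt sc (u i) (v i) (C i)) [0..<Suc m])
     = (\<Sum>f\<in>tensor_index m. sc (?P f) * tensor_basis m u v f) * (\<Sum>k<4. sc (C m k) * quat_basis (u m) (v m) k)"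
    using Suc by (simp add: qe_sum4g[of "u m"])
  also have "\<dots> = (\<Sum>f\<in>tensor_index m. \<Sum>k<4. sc (?P f) * tensor_basis m u v f * (sc (C m k) * quat_basis (u m) (v m) k))"
    by (subst sum_distrib_right, subst sum_distrib_left, rule refl)
  also have "\<dots> = (\<Sum>f\<in>tensor_index m. \<Sum>k<4. sc (\<Prod>i<Suc m. C i ((f(m := k)) i)) * tensor_basis (Suc m) u v (f(m := k)))"
  proof (intro sum.cong refl)
    fix f k
    have "(\<Prod>i<Suc m. C i ((f(m := k)) i)) = ?P f * C m k"
      by (simp add: prod.lessThan_Suc)
    then show "sc (?P f) * tensor_basis m u v f * (sc (C m k) * quat_basis (u m) (v m) k) =
        sc (\<Prod>i<Suc m. C i ((f(m := k)) i)) * tensor_basis (Suc m) u v (f(m := k))"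
      by (simp only: sc_mm TB_Suc)
  qed
  also have "\<dots> = (\<Sum>f\<in>tensor_index (Suc m). sc (\<Prod>i<Suc m. C i (f i)) * tensor_basis (Suc m) u v f)"
    by (rule sum_TI_Suc[symmetric])
  finally show ?case .
qed

lemma cm_mult: assumes "x * y = y * (x::'b)" "x * z = z * x" shows "x * (y * z) = (y * z) * x"
proof -
  have "x * (y * z) = (x * y) * z" by (rule mult.assoc[symmetric])
  also have "\<dots> = y * (x * z)" unfolding assms(1) by (rule mult.assoc)
  also have "\<dots> = (y * z) * x" unfolding assms(2) by (rule mult.assoc[symmetric])
  finally show ?thesis .
qed

lemma cm_qe: "x * u' = u' * x \<Longrightarrow> x * v' = v' * x \<Longrightarrow> x * quat_elt sc u' v' c = quat_elt sc u' v' c * x"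
proof -
  assume h: "x * u' = u' * x" "x * v' = v' * x"
  have a1: "x * sc t = sc t * x" for t by (rule sc_comm[symmetric])
  have a2: "x * (sc t * y) = sc t * y * x" if "x * y = y * x" for t y
    by (simp only: sc_m2 that mult.assoc)
  have uv: "x * (u' * v') = (u' * v') * x" using h by (rule cm_mult)
  have "x * quat_elt sc u' v' c = x * sc (c 0) + x * (sc (c 1) * u') + x * (sc (c 2) * v') + x * (sc (c 3) * (u' * v'))"
    unfolding quat_elt_def by (simp only: distrib_left)
  also have "\<dots> = sc (c 0) * x + sc (c 1) * u' * x + sc (c 2) * v' * x + sc (c 3) * (u' * v') * x"
    by (simp only: a1 a2[OF h(1)] a2[OF h(2)] a2[OF uv])
  also have "\<dots> = quat_elt sc u' v' c * x"
    unfolding quat_elt_def by (simp only: distrib_right)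
  finally show ?thesis .
qed

lemma s_pl: "(\<And>i j. i < m \<Longrightarrow> j < i \<Longrightarrow> \<sigma> (g i) * \<sigma> (g j) = \<sigma> (g j) * \<sigma> (g i)) \<Longrightarrow>
  \<sigma> (prod_list (map g [0..<m])) = prod_list (map (\<lambda>i. \<sigma> (g i)) [0..<m])"
proof (induction m)
  case 0 then show ?case by simp
next
  case (Suc m)
  have ih: "\<sigma> (prod_list (map g [0..<m])) = prod_list (map (\<lambda>i. \<sigma> (g i)) [0..<m])"
    by (rule Suc.IH) (use Suc.prems less_SucI in blast)
  have "\<sigma> (prod_list (map g [0..<Suc m])) = \<sigma> (g m) * prod_list (map (\<lambda>i. \<sigma> (g i)) [0..<m])"
    by (simp add: ih)
  also have "\<dots> = prod_list (map (\<lambda>i. \<sigma> (g i)) [0..<m]) * \<sigma> (g m)"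
    by (rule pl_comm[symmetric]) (use Suc.prems in auto)
  finally show ?case by simp
qed

end




locale glob = base sc \<sigma> for sc :: "'a::field \<Rightarrow> 'b::ring_1" and \<sigma> :: "'b \<Rightarrow> 'b" +
  fixes n :: nat and a b :: "nat \<Rightarrow> 'a" and u v :: "nat \<Rightarrow> 'b" and alph :: "nat \<Rightarrow> 'a"
  assumes TD: "tensor_decomp sc \<sigma> n a b u v"
    and DR: "\<forall>i<n. disc_rep sc \<sigma> (a i) (b i) (u i) (v i) (alph i)"
begin

abbreviation qi where "qi i \<equiv> quat_elt sc (u i) (v i)"
abbreviation e where "e \<equiv> tensor_basis n u v"

lemma rel: "i < n \<Longrightarrow> u i * u i + u i = sc (a i) \<and> v i * v i = sc (b i) \<and> b i \<noteq> 0 \<and> v i * u i = (u i + 1) * v i"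
  using TD unfolding tensor_decomp_def by blast
lemma com: "i < n \<Longrightarrow> j < n \<Longrightarrow> i \<noteq> j \<Longrightarrow> u i * u j = u j * u i \<and> u i * v j = v j * u i \<and> v i * v j = v j * v i"
  using TD unfolding tensor_decomp_def by blast
lemma stab: "i < n \<Longrightarrow> \<sigma> (u i) \<in> quat_sub sc (u i) (v i) \<and> \<sigma> (v i) \<in> quat_sub sc (u i) (v i)"
  using TD unfolding tensor_decomp_def by blast
lemma spanA: "\<exists>c. x = (\<Sum>f\<in>tensor_index n. sc (c f) * e f)"
  using TD unfolding tensor_decomp_def by blast
lemma indA: "(\<Sum>f\<in>tensor_index n. sc (c f) * e f) = 0 \<Longrightarrow> f \<in> tensor_index n \<Longrightarrow> c f = 0"
  using TD unfolding tensor_decomp_def by blast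

lemma qind: assumes i: "i < n" and h: "qi i c = 0" shows "c 0 = 0 \<and> c 1 = 0 \<and> c 2 = 0 \<and> c 3 = 0"
proof -
  define fk where "fk = (\<lambda>k::nat. \<lambda>j::nat. if j = i then k else 0)"
  have fkTI: "fk k \<in> tensor_index n" if "k < 4" for k using i that by (auto simp: fk_def tensor_index_def)
  have fkinj: "inj_on fk {..<4}"
  proof (rule inj_onI)
    fix x y assume "fk x = fk y" then have "fk x i = fk y i" by simp
    then show "x = y" by (simp add: fk_def)
  qed
  have fki: "fk k i = k" for k by (simp add: fk_def)
  have efk: "e (fk k) = quat_basis (u i) (v i) k" if "k < 4" for k
    unfolding tensor_basis_def by (rule trans[OF pl_single[OF i]]) (auto simp: fk_def quat_basis_def)
  define C where "C = (\<lambda>f. if f \<in> fk ` {..<4} then c (f i) else 0)"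
  have "(\<Sum>f\<in>tensor_index n. sc (C f) * e f) = (\<Sum>f\<in>fk ` {..<4}. sc (c (f i)) * e f)"
    by (rule sum.mono_neutral_cong_right) (auto simp: C_def TI_finite fkTI)
  also have "\<dots> = (\<Sum>k<4. sc (c k) * quat_basis (u i) (v i) k)"
    by (subst sum.reindex[OF fkinj]) (auto simp: efk fki intro!: sum.cong)
  also have "\<dots> = qi i c" by (rule qe_sum4g[symmetric])
  finally have "(\<Sum>f\<in>tensor_index n. sc (C f) * e f) = 0" using h by simp
  then have z: "C (fk k) = 0" if "k < 4" for k using indA fkTI that by blast
  have "C (fk k) = c k" if "k < 4" for k using that by (auto simp: C_def fk_def)
  then have "c k = 0" if "k < 4" for k using z that by metis
  then show ?thesis by simp
qed

lemma quat_i: "i < n \<Longrightarrow> quat sc \<sigma> (u i) (v i) (a i) (b i)"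
  apply (rule quat.intro[OF base_axioms])
  apply (rule quat_axioms.intro)
  using rel stab qind by auto

definition PP where "PP i L \<longleftrightarrow> L 0 = 1 \<and>
    (\<forall>c c'. \<sigma> (qi i c) = qi i c' \<longrightarrow> (\<Sum>k<4. c' k * L k) = (\<Sum>k<4. c k * L k)) \<and>
    (\<forall>k<4. \<forall>c'. \<sigma> (quat_basis (u i) (v i) k) * quat_basis (u i) (v i) k = qi i c' \<longrightarrow>
        (\<exists>s t. (\<Sum>j<4. c' j * L j) = s^2 + alph i * t^2))"

lemma PP_ex: "i < n \<Longrightarrow> \<exists>L. PP i L"
  unfolding PP_def using quat.quat_main[OF quat_i DR[rule_format]] rel by blast

lemma lam_ex: "\<exists>lam. \<forall>i<n. PP i (lam i)"
proof -
  have "\<forall>i\<in>{..<n}. \<exists>L. PP i L" using PP_ex by blast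
  then obtain lam where "\<forall>i\<in>{..<n}. PP i (lam i)" by (metis bchoice)
  then show ?thesis by auto
qed

definition lam :: "nat \<Rightarrow> nat \<Rightarrow> 'a" where
  "lam = (SOME lam. \<forall>i<n. PP i (lam i))"

lemma lam_props: "i < n \<Longrightarrow> PP i (lam i)"
  unfolding lam_def using someI_ex[OF lam_ex] by blast

lemma lam0: "i < n \<Longrightarrow> lam i 0 = 1" using lam_props unfolding PP_def by blast
lemma lam_s: "i < n \<Longrightarrow> \<sigma> (qi i c) = qi i c' \<Longrightarrow> (\<Sum>k<4. c' k * lam i k) = (\<Sum>k<4. c k * lam i k)"
  using lam_props unfolding PP_def by blast
lemma lam_n: "i < n \<Longrightarrow> k < 4 \<Longrightarrow> \<sigma> (quat_basis (u i) (v i) k) * quat_basis (u i) (v i) k = qi i c' \<Longrightarrow>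
        (\<exists>s t. (\<Sum>j<4. c' j * lam i j) = s^2 + alph i * t^2)"
  using lam_props unfolding PP_def by blast

definition Lf where "Lf f = (\<Prod>i<n. lam i (f i))"
definition coefs where "coefs x = (SOME c. x = (\<Sum>f\<in>tensor_index n. sc (c f) * e f))"
definition Phi where "Phi x = (\<Sum>f\<in>tensor_index n. coefs x f * Lf f)"

lemma Phi_eq: assumes "x = (\<Sum>f\<in>tensor_index n. sc (d f) * e f)"
  shows "Phi x = (\<Sum>f\<in>tensor_index n. d f * Lf f)"
proof -
  have cx: "x = (\<Sum>f\<in>tensor_index n. sc (coefs x f) * e f)"
    unfolding coefs_def by (rule someI_ex[OF spanA])
  have "(\<Sum>f\<in>tensor_index n. sc (coefs x f - d f) * e f) =
      (\<Sum>f\<in>tensor_index n. sc (coefs x f) * e f) - (\<Sum>f\<in>tensor_index n. sc (d f) * e f)"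
    by (simp add: sum_subtractf left_diff_distrib)
  also have "\<dots> = 0" using cx assms by simp
  finally have "\<And>f. f \<in> tensor_index n \<Longrightarrow> coefs x f - d f = 0" using indA[of "\<lambda>f. coefs x f - d f"] by simp
  then show ?thesis unfolding Phi_def by (intro sum.cong refl) simp
qed

lemma Phi_add: "Phi (x + y) = Phi x + Phi y"
proof -
  obtain cx cy where cx: "x = (\<Sum>f\<in>tensor_index n. sc (cx f) * e f)" and cy: "y = (\<Sum>f\<in>tensor_index n. sc (cy f) * e f)"
    using spanA by metis
  have "x + y = (\<Sum>f\<in>tensor_index n. sc (cx f + cy f) * e f)"
    unfolding cx cy by (simp add: sum.distrib distrib_right)
  then have "Phi (x + y) = (\<Sum>f\<in>tensor_index n. (cx f + cy f) * Lf f)" by (rule Phi_eq)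
  then show ?thesis unfolding Phi_eq[OF cx] Phi_eq[OF cy] by (simp add: sum.distrib distrib_right)
qed

lemma Phi_scm: "Phi (sc t * x) = t * Phi x"
proof -
  obtain cx where cx: "x = (\<Sum>f\<in>tensor_index n. sc (cx f) * e f)" using spanA by metis
  have "sc t * x = (\<Sum>f\<in>tensor_index n. sc (t * cx f) * e f)"
    unfolding cx by (simp add: sum_distrib_left sc_m3)
  then have "Phi (sc t * x) = (\<Sum>f\<in>tensor_index n. (t * cx f) * Lf f)" by (rule Phi_eq)
  then show ?thesis unfolding Phi_eq[OF cx] by (simp add: sum_distrib_left mult.assoc)
qed

lemma Phi_zero: "Phi 0 = 0"
  using Phi_scm[of 0 0] by simp

lemma Phi_sum: "Phi (sum g S) = (\<Sum>s\<in>S. Phi (g s))"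
  by (induction S rule: infinite_finite_induct) (simp_all add: Phi_zero Phi_add)

lemma Phi_prod: "Phi (prod_list (map (\<lambda>i. qi i (C i)) [0..<n])) = (\<Prod>i<n. \<Sum>k<4. C i k * lam i k)"
proof -
  have "Phi (prod_list (map (\<lambda>i. qi i (C i)) [0..<n])) = (\<Sum>f\<in>tensor_index n. (\<Prod>i<n. C i (f i)) * Lf f)"
    by (rule Phi_eq) (rule expand)
  also have "\<dots> = (\<Sum>f\<in>tensor_index n. \<Prod>i<n. C i (f i) * lam i (f i))"
    unfolding Lf_def by (simp add: prod.distrib)
  also have "\<dots> = (\<Prod>i<n. \<Sum>k<4. C i k * lam i k)" by (rule sumprod_TI)
  finally show ?thesis .
qed

lemma e_prod: "f \<in> tensor_index n \<Longrightarrow> e f = prod_list (map (\<lambda>i. qi i (un (f i))) [0..<n])"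
  unfolding tensor_basis_def by (intro arg_cong[where f=prod_list] map_cong refl)
    (simp add: qe_ung tensor_index_def)

lemma sum_un: "j < 4 \<Longrightarrow> (\<Sum>k<4. un j k * lam i k) = lam i j"
  using cases4[of j] by (auto simp: sum4 un_def)

lemma Phi_e: "f \<in> tensor_index n \<Longrightarrow> Phi (e f) = Lf f"
  by (simp add: e_prod Phi_prod Lf_def sum_un tensor_index_def)

lemma Q_comm: "i < n \<Longrightarrow> j < n \<Longrightarrow> i \<noteq> j \<Longrightarrow> qi i c * qi j d = qi j d * qi i c"
proof -
  assume ij: "i < n" "j < n" "i \<noteq> j"
  have uj: "u j * qi i c = qi i c * u j" using com[OF ij(2,1)] com[OF ij(1,2)] ij by (intro cm_qe) auto
  have vj: "v j * qi i c = qi i c * v j" using com[OF ij(2,1)] com[OF ij(1,2)] ij by (intro cm_qe) auto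
  show ?thesis using uj vj by (intro cm_qe) auto
qed

lemma sQ: "i < n \<Longrightarrow> \<exists>c'. \<sigma> (qi i c) = qi i c'"
  by (rule quat.s_Q[OF quat_i])

lemma qmul: "i < n \<Longrightarrow> qi i c * qi i d = qi i (qm (a i) (b i) c d)"
  by (rule quat.qe_mult[OF quat_i])

end




context glob begin

lemma TI_lt: "f \<in> tensor_index n \<Longrightarrow> i < n \<Longrightarrow> f i < 4"
  by (simp add: tensor_index_def)

lemma se_prod: assumes f: "f \<in> tensor_index n"
  shows "\<exists>S. (\<forall>i<n. \<sigma> (qi i (un (f i))) = qi i (S i)) \<and> \<sigma> (e f) = prod_list (map (\<lambda>i. qi i (S i)) [0..<n])"
proof -
  define S where "S i = (SOME c'. \<sigma> (qi i (un (f i))) = qi i c')" for i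
  have S: "\<sigma> (qi i (un (f i))) = qi i (S i)" if "i < n" for i
    unfolding S_def by (rule someI_ex[OF sQ[OF that]])
  have "\<sigma> (e f) = prod_list (map (\<lambda>i. \<sigma> (qi i (un (f i)))) [0..<n])"
    unfolding e_prod[OF f]
  proof (rule s_pl)
    fix i j assume ij: "i < n" "j < i"
    then show "\<sigma> (qi i (un (f i))) * \<sigma> (qi j (un (f j))) = \<sigma> (qi j (un (f j))) * \<sigma> (qi i (un (f i)))"
      using S[of i] S[of j] Q_comm[of i j] by simp
  qed
  also have "\<dots> = prod_list (map (\<lambda>i. qi i (S i)) [0..<n])"
    by (intro arg_cong[where f=prod_list] map_cong refl) (simp add: S)
  finally show ?thesis using S by blast
qed

lemma Phi_se: assumes f: "f \<in> tensor_index n" shows "Phi (\<sigma> (e f)) = Lf f"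
proof -
  obtain S where S: "\<forall>i<n. \<sigma> (qi i (un (f i))) = qi i (S i)" and se: "\<sigma> (e f) = prod_list (map (\<lambda>i. qi i (S i)) [0..<n])"
    using se_prod[OF f] by blast
  have "Phi (\<sigma> (e f)) = (\<Prod>i<n. \<Sum>k<4. S i k * lam i k)" unfolding se by (rule Phi_prod)
  also have "\<dots> = (\<Prod>i<n. \<Sum>k<4. un (f i) k * lam i k)"
    by (intro prod.cong refl) (simp add: lam_s S)
  also have "\<dots> = Lf f" unfolding Lf_def by (intro prod.cong refl) (simp add: sum_un TI_lt[OF f])
  finally show ?thesis .
qed

lemma Phi_alt: "Phi (\<sigma> y + y) = 0"
proof -
  obtain d where d: "y = (\<Sum>f\<in>tensor_index n. sc (d f) * e f)" using spanA by blast
  have "\<sigma> y + y = (\<Sum>f\<in>tensor_index n. sc (d f) * \<sigma> (e f) + sc (d f) * e f)"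
    unfolding d by (simp only: s_sum s_scm sum.distrib)
  then have "Phi (\<sigma> y + y) = (\<Sum>f\<in>tensor_index n. d f * Lf f + d f * Lf f)"
    by (simp add: Phi_sum Phi_add Phi_scm Phi_se Phi_e)
  also have "\<dots> = 0" by (simp add: a_c2)
  finally show ?thesis .
qed

lemma V_add: "p \<in> pf_values alph n \<Longrightarrow> q \<in> pf_values alph n \<Longrightarrow> p + q \<in> pf_values alph n"
  unfolding pf_range by (auto simp: pf_add[OF c2])
lemma V_sq: "p \<in> pf_values alph n \<Longrightarrow> t^2 * p \<in> pf_values alph n"
  unfolding pf_range by (auto simp: pf_scal)
lemma V_0: "0 \<in> pf_values alph n"
  by (simp add: pf_values_def)

lemma Phi_see: assumes f: "f \<in> tensor_index n" shows "Phi (\<sigma> (e f) * e f) \<in> pf_values alph n"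
proof -
  obtain S where S: "\<forall>i<n. \<sigma> (qi i (un (f i))) = qi i (S i)" and se: "\<sigma> (e f) = prod_list (map (\<lambda>i. qi i (S i)) [0..<n])"
    using se_prod[OF f] by blast
  define D where "D i = qm (a i) (b i) (S i) (un (f i))" for i
  have "\<sigma> (e f) * e f = prod_list (map (\<lambda>i. qi i (S i) * qi i (un (f i))) [0..<n])"
    unfolding se unfolding e_prod[OF f]
    by (rule pl_mult[symmetric]) (simp add: Q_comm)
  also have "\<dots> = prod_list (map (\<lambda>i. qi i (D i)) [0..<n])"
    by (intro arg_cong[where f=prod_list] map_cong refl) (simp add: qmul D_def)
  finally have P: "Phi (\<sigma> (e f) * e f) = (\<Prod>i<n. \<Sum>k<4. D i k * lam i k)" by (simp add: Phi_prod)
  have "\<forall>i\<in>{..<n}. \<exists>st. (\<Sum>k<4. D i k * lam i k) = fst st ^ 2 + alph i * snd st ^ 2"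
  proof
    fix i assume "i \<in> {..<n}"
    then have i: "i < n" by simp
    have "\<sigma> (quat_basis (u i) (v i) (f i)) * quat_basis (u i) (v i) (f i) = qi i (D i)"
      using S i unfolding D_def by (simp add: qe_ung[symmetric] TI_lt[OF f] qmul)
    then obtain s t where "(\<Sum>k<4. D i k * lam i k) = s^2 + alph i * t^2"
      using lam_n[OF i TI_lt[OF f i]] by blast
    then show "\<exists>st. (\<Sum>k<4. D i k * lam i k) = fst st ^ 2 + alph i * snd st ^ 2" by (intro exI[of _ "(s, t)"]) simp
  qed
  then obtain st where st: "\<forall>i\<in>{..<n}. (\<Sum>k<4. D i k * lam i k) = fst (st i) ^ 2 + alph i * snd (st i) ^ 2"
    by (metis bchoice)
  have "(\<Prod>i<n. \<Sum>k<4. D i k * lam i k) = (\<Prod>i<n. fst (st i) ^ 2 + alph i * snd (st i) ^ 2)"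
    using st by (intro prod.cong refl) simp
  then have "Phi (\<sigma> (e f) * e f) = (\<Prod>i<n. fst (st i) ^ 2 + alph i * snd (st i) ^ 2)" using P by simp
  also have "\<dots> = pf_bilin alph n (\<lambda>S. (\<Prod>i\<in>S. snd (st i)) * (\<Prod>i\<in>{..<n} - S. fst (st i)))
       (\<lambda>S. (\<Prod>i\<in>S. snd (st i)) * (\<Prod>i\<in>{..<n} - S. fst (st i)))" by (rule pf_prod)
  also have "\<dots> \<in> range (\<lambda>x. pf_bilin alph n x x)" by (rule rangeI)
  finally show ?thesis unfolding pf_range .
qed

lemma Phi_norm: "Phi (\<sigma> y * y) \<in> pf_values alph n"
proof -
  obtain d where d: "y = (\<Sum>f\<in>tensor_index n. sc (d f) * e f)" using spanA by blast
  have "S \<subseteq> tensor_index n \<longrightarrow> Phi (\<sigma> (\<Sum>f\<in>S. sc (d f) * e f) * (\<Sum>f\<in>S. sc (d f) * e f)) \<in> pf_values alph n"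
    if "finite S" for S
    using that
  proof (induction S rule: finite_induct)
    case empty then show ?case by (simp add: Phi_zero V_0)
  next
    case (insert g S)
    show ?case
    proof
      assume sub: "insert g S \<subseteq> tensor_index n"
      let ?t = "sc (d g) * e g" and ?R = "\<Sum>f\<in>S. sc (d f) * e f"
      have gT: "g \<in> tensor_index n" using sub by simp
      have IH: "Phi (\<sigma> ?R * ?R) \<in> pf_values alph n" using insert sub by simp
      define w where "w = \<sigma> ?R * ?t"
      have "\<sigma> (?t + ?R) * (?t + ?R) = (\<sigma> ?t * ?t + \<sigma> ?R * ?R) + (\<sigma> w + w)"
        unfolding w_def by (simp add: distrib_left distrib_right add_ac)
      then have "Phi (\<sigma> (?t + ?R) * (?t + ?R)) = Phi (\<sigma> ?t * ?t) + Phi (\<sigma> ?R * ?R)"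
        using Phi_add[of "\<sigma> ?t * ?t + \<sigma> ?R * ?R" "\<sigma> w + w"] Phi_alt[of w] Phi_add[of "\<sigma> ?t * ?t" "\<sigma> ?R * ?R"]
        by simp
      moreover have tt: "\<sigma> ?t * ?t = sc (d g * d g) * (\<sigma> (e g) * e g)"
        by (simp only: s_scm sc_mm)
      have "Phi (\<sigma> ?t * ?t) = (d g)^2 * Phi (\<sigma> (e g) * e g)"
        unfolding tt by (simp only: Phi_scm power2_eq_square)
      then have "Phi (\<sigma> ?t * ?t) \<in> pf_values alph n" using V_sq Phi_see[OF gT] by simp
      ultimately have "Phi (\<sigma> (?t + ?R) * (?t + ?R)) \<in> pf_values alph n" using IH V_add by simp
      then show "Phi (\<sigma> (\<Sum>f\<in>insert g S. sc (d f) * e f) * (\<Sum>f\<in>insert g S. sc (d f) * e f)) \<in> pf_values alph n"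
        using insert(1,2) by simp
    qed
  qed
  then show ?thesis using d TI_finite by blast
qed

lemma Phi_one: "Phi 1 = 1"
proof -
  have z: "(\<lambda>_. 0) \<in> tensor_index n" by (simp add: tensor_index_def)
  have "e (\<lambda>_. 0) = 1" unfolding tensor_basis_def by (rule pl_ones) (simp add: quat_basis_def)
  then have "Phi 1 = Lf (\<lambda>_. 0)" using Phi_e[OF z] by simp
  also have "\<dots> = 1" unfolding Lf_def by (simp add: lam0)
  finally show ?thesis .
qed

lemma V_sum: "(\<Sum>i<k. Phi (\<sigma> (y i) * y i)) \<in> pf_values alph n" for y :: "nat \<Rightarrow> 'b"
  by (induction k) (simp_all add: V_0 V_add Phi_norm)

lemma main_glob: fixes x :: "nat \<Rightarrow> 'b" and m :: nat assumes "sc \<alpha> + (\<Sum>i<m. \<sigma> (x i) * x i) \<in> Alt \<sigma>" shows "\<alpha> \<in> pf_values alph n"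
proof -
  obtain z where z: "sc \<alpha> + (\<Sum>i<m. \<sigma> (x i) * x i) = \<sigma> z + z" using assms Alt_iff by blast
  have "Phi (sc \<alpha> + (\<Sum>i<m. \<sigma> (x i) * x i)) = \<alpha> + (\<Sum>i<m. Phi (\<sigma> (x i) * x i))"
    using Phi_scm[of \<alpha> 1] by (simp add: Phi_add Phi_sum Phi_one)
  then have "\<alpha> + (\<Sum>i<m. Phi (\<sigma> (x i) * x i)) = 0" using z Phi_alt by simp
  then have "\<alpha> = - (\<Sum>i<m. Phi (\<sigma> (x i) * x i))" by (simp add: eq_neg_iff_add_eq_0)
  then have a: "\<alpha> = (\<Sum>i<m. Phi (\<sigma> (x i) * x i))" by (simp only: a_minus)
  then show ?thesis using V_sum[of x m] by simp
qed

end

theorem lemma4p8: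
  fixes sc :: "'a::field \<Rightarrow> 'b::ring_1" and \<sigma> :: "'b \<Rightarrow> 'b"
    and n :: nat and a b :: "nat \<Rightarrow> 'a" and u v :: "nat \<Rightarrow> 'b" and alph :: "nat \<Rightarrow> 'a"
    and \<alpha> :: 'a and m :: nat and x :: "nat \<Rightarrow> 'b"
  assumes "(1::'a) + 1 = 0"
    and "central_simple sc"
    and "involution_first_kind sc \<sigma>"
    and "orthogonal_char2 \<sigma>"
    and "n \<ge> 1"
    and "tensor_decomp sc \<sigma> n a b u v"
    and "\<forall>i<n. disc_rep sc \<sigma> (a i) (b i) (u i) (v i) (alph i)"
    and "sc \<alpha> + (\<Sum>i<m. \<sigma> (x i) * x i) \<in> Alt \<sigma>"
  shows "\<alpha> \<in> pf_values alph n"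
proof -
  interpret glob sc \<sigma> n a b u v alph
    apply (rule glob.intro)
     apply (rule base.intro)
    using assms(1-4,6,7) by (auto simp: central_simple_def orthogonal_char2_def intro: glob_axioms.intro)
  show ?thesis by (rule main_glob[OF assms(8)])
qed



end
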